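(* Let $q=2^h$ with $h\equiv 1\pmod 2$, and let $A_{1,3},A_{1,4},A_{2,3},A_{2,4},A_{3,4}\in\mathbb F_{q^4}$ with $(A_{1,3},A_{2,3},A_{3,4})\neq(0,0,0)$. Then the system $$\begin{cases} A_{2,3}u+A_{1,3}v=0\\ A_{2,4}u+A_{1,4}v=0\\ A_{3,4}v+A_{2,4}(u^q+v^{q^2})+A_{2,3}(u^{q^2}+v^{q^2}+v^q)=0\\ A_{3,4}u+A_{1,4}(u^q+v^{q^2})+A_{1,3}(u^{q^2}+v^{q^2}+v^q)=0 \end{cases}$$ has at most $q^2$ solutions $(u,v)\in\mathbb F_{q^4}^2$. *)

theory Defs
  imports Main
begin

end

theory Submission
  imports Defs "HOL-Computational_Algebra.Polynomial"
begin


lemma roots3: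
  fixes a b c :: "'a::field"
  assumes "q \<ge> 2" "(a,b,c) \<noteq> (0,0,0)"
  shows "card {t. a*t + b*t^q + c*t^(q^2) = 0} \<le> q^2"
proof -
  define p where "p = monom a 1 + monom b q + monom c (q^2)"
  have q1: "q \<noteq> 1" "q^2 \<noteq> 1" "q^2 \<noteq> q" "1 \<noteq> q" "1 \<noteq> q^2" "q \<noteq> q^2" using assms(1)
    by (auto simp: power2_eq_square)
  have "coeff p 1 = a" "coeff p q = b" "coeff p (q^2) = c"
    using q1 by (simp_all add: p_def coeff_monom)
  hence "p \<noteq> 0" using assms(2) by auto
  have "degree p \<le> q^2" unfolding p_def
    using q1 assms(1)
    by (intro degree_add_le degree_monom_le[THEN order_trans]) (auto simp: power2_eq_square)
  have "{t. a*t + b*t^q + c*t^(q^2) = 0} = {x. poly p x = 0}"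
    by (auto simp: p_def poly_monom)
  thus ?thesis using card_poly_roots_bound[OF \<open>p \<noteq> 0\<close>] \<open>degree p \<le> q^2\<close> by simp
qed

lemma char2:
  assumes "card (UNIV :: 'a::{field,finite} set) = 2^k" "k > 0"
  shows "(2::'a) = 0"
proof -
  have "(\<Sum>y\<in>UNIV. 1 + y) = (\<Sum>y\<in>(UNIV::'a set). y)"
    by (rule sum.reindex_bij_witness[where i="\<lambda>y. y - 1" and j="\<lambda>y. 1 + y"]) auto
  hence "of_nat (card (UNIV :: 'a set)) = (0::'a)" by (simp add: sum.distrib)
  hence "(2::'a)^k = 0" using assms(1) by simp
  thus ?thesis by simp
qed

lemma pow_card:
  fixes x :: "'a::{field,finite}"
  shows "x ^ card (UNIV :: 'a set) = x"
proof (cases "x = 0")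
  case True thus ?thesis using finite_UNIV_card_ge_0[where 'a='a] by simp
next
  case False
  let ?N = "UNIV - {0::'a}"
  have "(\<Prod>y\<in>?N. x * y) = (\<Prod>y\<in>?N. y)"
    by (rule prod.reindex_bij_witness[where i="\<lambda>y. y / x" and j="\<lambda>y. x * y"]) (use False in auto)
  hence "x ^ card ?N * (\<Prod>y\<in>?N. y) = (\<Prod>y\<in>?N. y)" by (simp add: prod.distrib)
  moreover have "(\<Prod>y\<in>?N. y) \<noteq> 0" by simp
  ultimately have 1: "x ^ card ?N = 1" by simp
  have "card (UNIV :: 'a set) = Suc (card ?N)"
    by (metis card_Suc_Diff1 finite_UNIV UNIV_I)
  hence "x ^ card (UNIV :: 'a set) = x * x ^ card ?N" by (simp only: power_Suc)
  thus ?thesis using 1 by simp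
qed

lemma frob:
  fixes a b :: "'a::field"
  assumes "(2::'a) = 0"
  shows "(a + b) ^ (2^k) = a^(2^k) + b^(2^k)"
proof (induction k)
  case 0 thus ?case by simp
next
  case (Suc k)
  have e: "\<And>x::'a. x ^ (2^Suc k) = (x^(2^k))^2" by (simp only: power_Suc2 power_mult)
  have "(a + b) ^ (2^Suc k) = ((a+b)^(2^k))^2" by (rule e)
  also have "\<dots> = (a^(2^k) + b^(2^k))^2" using Suc by simp
  also have "\<dots> = (a^(2^k))^2 + (b^(2^k))^2 + 2 * a^(2^k) * b^(2^k)" by (rule power2_sum)
  also have "\<dots> = (a^(2^k))^2 + (b^(2^k))^2" using assms by simp
  also have "\<dots> = a^(2^Suc k) + b^(2^Suc k)" by (simp only: e)
  finally show ?case .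
qed

lemma key:
  fixes y :: "'a::field"
  assumes two: "(2::'a) = 0" and qd: "q = 2^h" and ho: "odd h"
    and fix4: "y ^ (q^4) = y"
    and eq: "y^(q+1) + y^q + 1 = 0"
  shows False
proof -
  have xx: "\<And>x::'a. x + x = 0" using two by (metis mult_2 mult_zero_left)
  have fr: "\<And>a b::'a. (a+b)^q = a^q + b^q" using frob[OF two] qd by simp
  have q0: "q > 0" using qd by simp
  have y1: "y + 1 \<noteq> 0"
  proof
    assume "y + 1 = 0"
    have "y^(q+1) + y^q = y^q * (y+1)" by (simp add: power_add algebra_simps)
    hence "y^(q+1) + y^q = 0" using \<open>y + 1 = 0\<close> by simp
    then show False using eq by simp
  qed
  have yq: "y^q = 1/(y+1)" using eq y1
    by (simp add: field_simps power_add) (metis add.assoc add_cancel_left_left xx mult.commute)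
  have y0: "y \<noteq> 0" using eq q0 by (cases q) auto
  have yq0: "y^q \<noteq> 0" using y0 by simp
  have yq2: "y^(q^2) = (y+1)/y"
  proof -
    have "y^(q^2) = (y^q)^q" by (simp add: power2_eq_square power_mult)
    also have "\<dots> = 1/(y^q+1)" using yq by (simp add: power_one_over fr)
    also have "y^q + 1 = y/(y+1)" using yq y1 two by (simp add: field_simps)
    finally show ?thesis by simp
  qed
  have yq3: "y^(q^3) = y"
  proof -
    have "y^(q^3) = (y^(q^2))^q" by (simp add: power_mult[symmetric] power3_eq_cube power2_eq_square mult.commute)
    also have "\<dots> = (y^q+1)/y^q" using yq2 by (simp add: power_divide fr)
    also have "\<dots> = 1 + 1/y^q" using yq0 by (simp add: field_simps)
    also have "\<dots> = 1 + (y+1)" using yq y1 by simp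
    also have "\<dots> = y" using xx by (metis add.assoc add.commute add_0)
    finally show ?thesis .
  qed
  have "q^4 = q^3*q" by (simp add: eval_nat_numeral)
  hence "y^(q^4) = (y^(q^3))^q" by (simp only: power_mult)
  hence yy: "y^q = y" using yq3 fix4 by simp
  hence e2: "y*y + y + 1 = 0" using eq by (simp add: power_add)
  hence sq: "y*y = y + 1" using xx by (metis add.assoc add_0 add.commute add.left_commute)
  have cube: "y^3 = 1"
  proof -
    have "y^3 = y * (y*y)" by (simp add: power3_eq_cube)
    also have "\<dots> = y*y + y" using sq by (simp add: algebra_simps)
    also have "\<dots> = 1" using sq xx by (metis add.assoc add.commute add_0)
    finally show ?thesis .
  qed
  obtain m where hm: "h = 2*m+1" using ho oddE by blast
  have "(4::nat)^m mod 3 = 1" by (induction m) (auto simp: mod_mult_right_eq[symmetric])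
  hence "q mod 3 = 2" using qd hm by (simp add: power_mult power_add mod_mult_right_eq[symmetric]) 
  hence "q = 3 * (q div 3) + 2" by presburger
  hence "y^q = (y^3)^(q div 3) * y^2" by (metis power_add power_mult)
  hence "y^q = y*y" using cube by (simp add: power2_eq_square)
  hence "y = y + 1" using yy sq by simp
  thus False by simp
qed


theorem proposition4p4:
  fixes A13 A14 A23 A24 A34 :: "'a :: {field, finite}"
    and h :: nat and q :: nat
  assumes q_def: "q = 2 ^ h"
    and h_odd: "odd h"
    and card_field: "card (UNIV :: 'a set) = q ^ 4"
    and nonzero: "(A13, A23, A34) \<noteq> (0, 0, 0)"
  shows "card {(u :: 'a, v :: 'a).
            A23 * u + A13 * v = 0 \<and>
            A24 * u + A14 * v = 0 \<and>
            A34 * v + A24 * (u ^ q + v ^ (q ^ 2)) + A23 * (u ^ (q ^ 2) + v ^ (q ^ 2) + v ^ q) = 0 \<and>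
            A34 * u + A14 * (u ^ q + v ^ (q ^ 2)) + A13 * (u ^ (q ^ 2) + v ^ (q ^ 2) + v ^ q) = 0}
         \<le> q ^ 2"
  (is "card ?S \<le> _")
proof -
  have h0: "h > 0" using h_odd by (cases h) auto
  have q2: "q \<ge> 2" using q_def h0 using power_increasing[of 1 h "2::nat"] by simp
  have "card (UNIV :: 'a set) = 2^(h*4)" using card_field q_def by (simp add: power_mult)
  hence two: "(2::'a) = 0" using char2 h0 by (metis mult_pos_pos zero_less_numeral)
  have xx: "\<And>x::'a. x + x = 0" using two by (metis mult_2 mult_zero_left)
  have fix4: "\<And>y::'a. y^(q^4) = y" using pow_card card_field by metis
  have fin: "\<And>B::'a set. finite B" by simp
  show ?thesis
  proof (cases "A13 = 0")
    case False
    define x where "x = A23 / A13"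
    define T where "T = {t. A34*t + (A14 + A13*x^q)*t^q + (A14*x^(q^2) + A13 + A13*x^(q^2)) * t^(q^2) = 0}"
    have vx: "v = x*u" if "(u,v) \<in> ?S" for u v
    proof -
      have "A23 * u + A13 * v = 0" using that by simp
      hence "A13 * v = A23 * u" using xx by (metis add.assoc add.commute add_0)
      thus ?thesis using False unfolding x_def by (simp add: field_simps)
    qed
    have "inj_on fst ?S"
    proof (rule inj_onI)
      fix p p' assume a: "p \<in> ?S" "p' \<in> ?S" "fst p = fst p'"
      obtain u v u' v' where pp: "p = (u,v)" "p' = (u',v')" by (cases p, cases p')
      have "v = x*u" "v' = x*u'" using vx a(1,2) unfolding pp by blast+
      thus "p = p'" using a(3) pp by simp
    qed
    moreover have "fst ` ?S \<subseteq> T"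
    proof
      fix t assume "t \<in> fst ` ?S"
      then obtain v where tv: "(t,v) \<in> ?S" by force
      hence v: "v = x*t" using vx by blast
      from tv have "A34 * t + A14 * (t ^ q + v ^ (q ^ 2)) + A13 * (t ^ (q ^ 2) + v ^ (q ^ 2) + v ^ q) = 0" by simp
      thus "t \<in> T" unfolding T_def v by (simp add: power_mult_distrib algebra_simps)
    qed
    ultimately have "card ?S \<le> card T" by (intro card_inj_on_le[OF _ _ fin])
    also have "card T \<le> q^2" unfolding T_def
    proof (rule roots3[OF q2], rule notI)
      assume "(A34, A14 + A13 * x ^ q, A14 * x ^ q\<^sup>2 + A13 + A13 * x ^ q\<^sup>2) = (0, 0, 0)"
      hence c: "A14 + A13 * x ^ q = 0" "A14 * x ^ q\<^sup>2 + A13 + A13 * x ^ q\<^sup>2 = 0" by auto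
      from c(1) have "A14 = A13 * x^q" using xx by (metis add.assoc add.commute add_0)
      with c(2) have "A13 * (x^q * x^(q^2) + x^(q^2) + 1) = 0" by (simp add: algebra_simps)
      hence e: "x^q * x^(q^2) + x^(q^2) + 1 = 0" using False by simp
      have "(x^q)^(q+1) + (x^q)^q + 1 = 0"
        using e by (simp add: power_add power2_eq_square power_mult[symmetric] mult.commute)
      thus False using key[OF two q_def h_odd fix4] by blast
    qed
    finally show ?thesis .
  next
    case A13: True
    show ?thesis
    proof (cases "A23 = 0")
      case False
      define T where "T = {t. A34*t + A23*t^q + (A24 + A23) * t^(q^2) = 0}"
      have u0: "u = 0" if "(u,v) \<in> ?S" for u v using that A13 False by simp
      have "inj_on snd ?S"
      proof (rule inj_onI)
        fix p p' assume a: "p \<in> ?S" "p' \<in> ?S" "snd p = snd p'"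
        obtain u v u' v' where pp: "p = (u,v)" "p' = (u',v')" by (cases p, cases p')
        have "u = 0" "u' = 0" using u0 a(1,2) unfolding pp by blast+
        thus "p = p'" using a(3) pp by simp
      qed
      moreover have "snd ` ?S \<subseteq> T"
      proof
        fix t assume "t \<in> snd ` ?S"
        then obtain u where tv: "(u,t) \<in> ?S" by force
        hence u: "u = 0" using u0 by blast
        from tv have "A34 * t + A24 * (u ^ q + t ^ (q ^ 2)) + A23 * (u ^ (q ^ 2) + t ^ (q ^ 2) + t ^ q) = 0" by simp
        thus "t \<in> T" unfolding T_def u using q2 by (simp add: algebra_simps zero_power)
      qed
      ultimately have "card ?S \<le> card T" by (intro card_inj_on_le[OF _ _ fin])
      also have "card T \<le> q^2" unfolding T_def
        by (rule roots3[OF q2]) (use False in auto)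
      finally show ?thesis .
    next
      case A23: True
      hence A34: "A34 \<noteq> 0" using A13 nonzero by auto
      define a where "a = - A14 / A34"
      define b where "b = - A24 / A34"
      define T where "T = {t. 1*t + (-(a^q))*t^q + (-(b^(q^2))) * t^(q^2) = 0}"
      define f where "f = (\<lambda>(u::'a,v::'a). u^q + v^(q^2))"
      have uv: "u = a * f (u,v) \<and> v = b * f (u,v)" if "(u,v) \<in> ?S" for u v
      proof -
        from that have "A34 * v + A24 * f (u,v) = 0" "A34 * u + A14 * f (u,v) = 0"
          using A13 A23 by (simp_all add: f_def)
        thus ?thesis using A34 unfolding a_def b_def by (simp add: field_simps eq_neg_iff_add_eq_0)
      qed
      have "inj_on f ?S"
      proof (rule inj_onI)
        fix p p' assume a: "p \<in> ?S" "p' \<in> ?S" "f p = f p'"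
        obtain u v u' v' where pp: "p = (u,v)" "p' = (u',v')" by (cases p, cases p')
        have "u = a * f (u,v) \<and> v = b * f (u,v)" "u' = a * f (u',v') \<and> v' = b * f (u',v')"
          using uv a(1,2) unfolding pp by blast+
        thus "p = p'" using a(3) pp by simp
      qed
      moreover have "f ` ?S \<subseteq> T"
      proof
        fix t assume "t \<in> f ` ?S"
        then obtain u v where tv: "(u,v) \<in> ?S" and t: "t = f (u,v)" by force
        have "t = (a*t)^q + (b*t)^(q^2)" using uv[OF tv] t unfolding f_def by simp
        thus "t \<in> T" unfolding T_def by (simp add: power_mult_distrib algebra_simps)
      qed
      ultimately have "card ?S \<le> card T" by (intro card_inj_on_le[OF _ _ fin])
      also have "card T \<le> q^2" unfolding T_def
        by (rule roots3[OF q2]) auto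
      finally show ?thesis .
    qed
  qed
qed
end
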